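(* For every positive constant $\varepsilon$, there is a deterministic Congested Clique algorithm which computes a proper $O(a^{2+\varepsilon})$-vertex-coloring of an input graph $G$ with arboricity $a\ge 2$ within $O(\log^* n)$ rounds.
   Context: Congested Clique model: there are $n$ processors (vertices) with distinct IDs of $O(\log n)$ bits; computation proceeds in synchronous rounds; in each round every pair of vertices may exchange a message of $O(\log n)$ bits; local computation is free. The input is a graph $G=(V,E')$ on the same vertex set; each vertex initially knows its incident edges in $G$, and $a$ is known to all vertices. The arboricity of a graph is the minimum number of forests whose union covers its edge set. A proper $k$-coloring is a map $\varphi:V\to\{1,\dots,k\}$ with $\varphi(u)\ne\varphi(v)$ for every edge $\{u,v\}$. $\log^* n$ is the number of times $\log_2$ must be iterated starting from $n$ until the value is below $2$. *)

theory Defs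
  imports Complex_Main
begin

definition simple_graph :: "nat set \<Rightarrow> nat set set \<Rightarrow> bool" where
  "simple_graph V E \<longleftrightarrow> (\<forall>e\<in>E. \<exists>u v. e = {u, v} \<and> u \<noteq> v \<and> u \<in> V \<and> v \<in> V)"

definition nbrs :: "nat set set \<Rightarrow> nat \<Rightarrow> nat set" where
  "nbrs E v = {u. {u, v} \<in> E}"

definition is_forest :: "nat set set \<Rightarrow> bool" where
  "is_forest F \<longleftrightarrow> \<not> (\<exists>vs. 3 \<le> length vs \<and> distinct vs \<and>
      (\<forall>i < length vs. {vs ! i, vs ! ((i + 1) mod length vs)} \<in> F))"

definition arboricity :: "nat set set \<Rightarrow> nat" where
  "arboricity E = (LEAST k. \<exists>F :: nat \<Rightarrow> nat set set.
      (\<Union>i<k. F i) = E \<and> (\<forall>i<k. is_forest (F i)))"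

definition proper_coloring :: "nat set set \<Rightarrow> (nat \<Rightarrow> nat) \<Rightarrow> bool" where
  "proper_coloring E \<phi> \<longleftrightarrow> (\<forall>u v. {u, v} \<in> E \<longrightarrow> \<phi> u \<noteq> \<phi> v)"

definition logstar :: "nat \<Rightarrow> nat" where
  "logstar n = (LEAST i. ((\<lambda>x. log 2 x) ^^ i) (real n) < 2)"

text \<open>A deterministic algorithm with local states of type 's.
  init n a V v N: initial state of the vertex with ID v, knowing n, a, the set of all IDs V
  and the IDs N of its neighbours in the input graph.
  send s w: message (a natural number) that a vertex in state s sends to vertex w.
  step s r: new state after receiving r u from each vertex u (r u = 0 for non-senders).
  out s: the colour output in state s.\<close>
record 's cc_alg =
  cc_init :: "nat \<Rightarrow> nat \<Rightarrow> nat set \<Rightarrow> nat \<Rightarrow> nat set \<Rightarrow> 's"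
  cc_send :: "'s \<Rightarrow> nat \<Rightarrow> nat"
  cc_step :: "'s \<Rightarrow> (nat \<Rightarrow> nat) \<Rightarrow> 's"
  cc_out  :: "'s \<Rightarrow> nat"

fun cc_run :: "'s cc_alg \<Rightarrow> nat \<Rightarrow> nat set \<Rightarrow> nat set set \<Rightarrow> nat \<Rightarrow> nat \<Rightarrow> 's" where
  "cc_run A a V E 0 = (\<lambda>v. cc_init A (card V) a V v (nbrs E v))"
| "cc_run A a V E (Suc t) = (\<lambda>v. cc_step A (cc_run A a V E t v)
      (\<lambda>u. if u \<in> V \<and> u \<noteq> v then cc_send A (cc_run A a V E t u) v else 0))"

end

theory Submission
  imports Defs
begin

lemma forest_subset: "is_forest F \<Longrightarrow> G \<subseteq> F \<Longrightarrow> is_forest G"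
  unfolding is_forest_def by blast

lemma forest_single: "is_forest {e}"
  unfolding is_forest_def
proof
  assume "\<exists>vs. 3 \<le> length vs \<and> distinct vs \<and> (\<forall>i<length vs. {vs ! i, vs ! ((i + 1) mod length vs)} \<in> {e})"
  then obtain vs where l: "3 \<le> length vs" and d: "distinct vs"
    and c: "\<forall>i<length vs. {vs ! i, vs ! ((i + 1) mod length vs)} \<in> {e}" by blast
  have ne: "vs \<noteq> []" using l by auto
  have "{vs!0, vs!1} = e" using c[rule_format, of 0] l ne by simp
  moreover have "{vs!1, vs!2} = e" using c[rule_format, of 1] l by (simp add: numeral_2_eq_2)
  ultimately have "vs!0 \<in> {vs!1, vs!2}" by blast
  moreover have "vs!0 \<noteq> vs!1" "vs!0 \<noteq> vs!2" using d l ne nth_eq_iff_index_eq[OF d, of 0 1] nth_eq_iff_index_eq[OF d, of 0 2] by auto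
  ultimately show False by blast
qed

definition twoset :: "nat set set \<Rightarrow> bool" where
  "twoset F \<longleftrightarrow> (\<forall>e\<in>F. \<exists>u v. e = {u, v} \<and> u \<noteq> v)"

lemma leaf_exists:
  assumes fin: "finite F" and ne: "F \<noteq> {}" and ts: "twoset F" and fo: "is_forest F"
  shows "\<exists>x\<in>\<Union>F. card {e\<in>F. x \<in> e} \<le> 1"
proof (rule ccontr)
  assume "\<not> ?thesis"
  hence deg: "\<And>x. x \<in> \<Union>F \<Longrightarrow> 2 \<le> card {e\<in>F. x \<in> e}" by force
  have finU: "finite (\<Union>F)" using fin ts unfolding twoset_def by auto
  define P where "P = (\<lambda>ps. distinct ps \<and> set ps \<subseteq> \<Union>F \<and> 2 \<le> length ps \<and>
      (\<forall>i. Suc i < length ps \<longrightarrow> {ps!i, ps!Suc i} \<in> F))"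
  obtain e where eF: "e \<in> F" using ne by blast
  then obtain u v where uv: "e = {u,v}" "u \<noteq> v" using ts unfolding twoset_def by blast
  have P0: "P [u,v]" unfolding P_def using uv eF by auto
  have bnd: "\<forall>ps. P ps \<longrightarrow> length ps < card (\<Union>F) + 1"
  proof (intro allI impI)
    fix ps assume "P ps"
    hence "distinct ps" "set ps \<subseteq> \<Union>F" unfolding P_def by auto
    hence "length ps \<le> card (\<Union>F)" using finU by (metis card_mono distinct_card)
    thus "length ps < card (\<Union>F) + 1" by simp
  qed
  obtain ps where Pps: "P ps" and mx: "\<And>qs. P qs \<Longrightarrow> length qs \<le> length ps"
    using ex_has_greatest_nat[of P "[u,v]" length "card (\<Union>F) + 1"] P0 bnd by blast
  define L where "L = length ps"
  have L2: "2 \<le> L" and dps: "distinct ps" and sps: "set ps \<subseteq> \<Union>F"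
    and eps: "\<And>i. Suc i < L \<Longrightarrow> {ps!i, ps!Suc i} \<in> F"
    using Pps unfolding P_def L_def by auto
  define x where "x = ps ! (L - 1)"
  define y where "y = ps ! (L - 2)"
  have s2: "Suc (L-2) = L-1" using L2 by arith
  have xy: "{y, x} \<in> F" using eps[of "L-2"] L2 s2 unfolding x_def y_def by simp
  have "x \<in> set ps" using L2 unfolding x_def L_def by (intro nth_mem) simp
  hence xU: "x \<in> \<Union>F" using sps by blast
  have fx: "finite {e\<in>F. x \<in> e}" using fin by simp
  have "2 \<le> card {e\<in>F. x \<in> e}" using deg xU .
  have "\<not> {e\<in>F. x \<in> e} \<subseteq> {{y,x}}"
  proof
    assume "{e\<in>F. x \<in> e} \<subseteq> {{y,x}}"
    hence "card {e\<in>F. x \<in> e} \<le> card {{y,x}}" by (intro card_mono) auto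
    thus False using \<open>2 \<le> card {e\<in>F. x \<in> e}\<close> by simp
  qed
  then obtain e2 where e2: "e2 \<in> F" "x \<in> e2" "e2 \<noteq> {y,x}" by blast
  obtain p q where pq: "e2 = {p,q}" "p \<noteq> q" using e2(1) ts unfolding twoset_def by blast
  obtain z where z: "e2 = {x, z}" "z \<noteq> x"
  proof (cases "x = p")
    case True thus ?thesis using that pq by blast
  next
    case False hence "x = q" using e2(2) pq by blast
    thus ?thesis using that[of p] pq by (simp add: insert_commute)
  qed
  have zy: "z \<noteq> y" using z e2 by (auto simp: insert_commute)
  show False
  proof (cases "z \<in> set ps")
    case False
    have "P (ps @ [z])" unfolding P_def
    proof (intro conjI allI impI)
      show "distinct (ps @ [z])" using dps False by simp
      show "set (ps @ [z]) \<subseteq> \<Union>F" using sps z e2 by auto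
      show "2 \<le> length (ps @ [z])" using L2 L_def by simp
      fix i assume i: "Suc i < length (ps @ [z])"
      show "{(ps @ [z]) ! i, (ps @ [z]) ! Suc i} \<in> F"
      proof (cases "Suc i < L")
        case True thus ?thesis using eps[OF True] by (simp add: nth_append L_def)
      next
        case False
        hence "i = L - 1" "Suc i = L" using i L_def by auto
        thus ?thesis using e2 z unfolding x_def by (simp add: nth_append L_def)
      qed
    qed
    from mx[OF this] show False by simp
  next
    case True
    then obtain j where j: "j < L" "ps ! j = z" unfolding L_def by (metis in_set_conv_nth)
    have jL: "j < L - 2"
    proof -
      have "j \<noteq> L - 1" using j z unfolding x_def by auto
      moreover have "j \<noteq> L - 2" using j zy unfolding y_def by auto
      ultimately show ?thesis using j by linarith
    qed
    define cs where "cs = drop j ps"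
    have lcs: "length cs = L - j" unfolding cs_def L_def by simp
    have nf: "\<not> (\<exists>vs. 3 \<le> length vs \<and> distinct vs \<and>
      (\<forall>i < length vs. {vs ! i, vs ! ((i + 1) mod length vs)} \<in> F))" using fo unfolding is_forest_def .
    have "3 \<le> length cs \<and> distinct cs \<and>
      (\<forall>i < length cs. {cs ! i, cs ! ((i + 1) mod length cs)} \<in> F)"
    proof (intro conjI allI impI)
      show "3 \<le> length cs" using lcs jL by linarith
      show "distinct cs" using dps unfolding cs_def by simp
      fix i assume i: "i < length cs"
      show "{cs ! i, cs ! ((i + 1) mod length cs)} \<in> F"
      proof (cases "i + 1 < length cs")
        case True
        hence "(i+1) mod length cs = i + 1" by simp
        moreover have "{ps ! (j+i), ps ! Suc (j+i)} \<in> F" using True lcs by (intro eps) linarith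
        ultimately show ?thesis unfolding cs_def using True lcs L_def
          by (simp add: add.commute)
      next
        case False
        hence ii: "i + 1 = length cs" using i by simp
        hence "(i+1) mod length cs = 0" by simp
        moreover have "cs ! i = x"
        proof -
          have "j + i = L - 1" using ii lcs jL by linarith
          thus ?thesis unfolding cs_def x_def using jL L_def by simp
        qed
        moreover have "cs ! 0 = z" unfolding cs_def using j L_def by simp
        ultimately show ?thesis using e2 z by simp
      qed
    qed
    hence "\<exists>vs. 3 \<le> length vs \<and> distinct vs \<and>
      (\<forall>i < length vs. {vs ! i, vs ! ((i + 1) mod length vs)} \<in> F)" by (rule exI)
    with nf show False by (rule notE)
  qed
qed

lemma forest_card:
  assumes "finite S" "is_forest F" "\<forall>e\<in>F. \<exists>u v. e = {u,v} \<and> u \<noteq> v \<and> u \<in> S \<and> v \<in> S"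
  shows "card F \<le> card S - 1"
  using assms
proof (induction "card S" arbitrary: S F rule: less_induct)
  case less
  show ?case
  proof (cases "F = {}")
    case True thus ?thesis by simp
  next
    case False
    have FS: "F \<subseteq> Pow S" using less.prems(3) by auto
    hence finF: "finite F" using less.prems(1) by (meson finite_Pow_iff finite_subset)
    have ts: "twoset F" using less.prems(3) unfolding twoset_def by blast
    obtain x where xU: "x \<in> \<Union>F" and dx: "card {e\<in>F. x \<in> e} \<le> 1"
      using leaf_exists[OF finF False ts less.prems(2)] by blast
    obtain e0 where e0: "e0 \<in> F" "x \<in> e0" using xU by blast
    then obtain u v where uv: "e0 = {u,v}" "u \<noteq> v" "u \<in> S" "v \<in> S" using less.prems(3) by blast
    have xS: "x \<in> S" using uv e0 by auto
    obtain w where w: "w \<in> S" "w \<noteq> x" using uv e0 by auto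
    define S' where "S' = S - {x}"
    define F' where "F' = {e\<in>F. x \<notin> e}"
    have cS: "card S' = card S - 1" unfolding S'_def using xS less.prems(1) by simp
    have "w \<in> S'" using w unfolding S'_def by blast
    moreover have "finite S'" unfolding S'_def using less.prems(1) by simp
    ultimately have "card S' > 0" by (auto simp: card_gt_0_iff)
    hence cS1: "1 \<le> card S'" by simp
    have lt: "card S' < card S" using cS cS1 by linarith
    have IH: "card F' \<le> card S' - 1"
    proof (rule less.hyps[OF lt])
      show "finite S'" unfolding S'_def using less.prems(1) by simp
      show "is_forest F'" using less.prems(2) unfolding F'_def by (rule forest_subset) auto
      show "\<forall>e\<in>F'. \<exists>u v. e = {u, v} \<and> u \<noteq> v \<and> u \<in> S' \<and> v \<in> S'"
      proof
        fix e assume e: "e \<in> F'"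
        then obtain p q where pq: "e = {p,q}" "p \<noteq> q" "p \<in> S" "q \<in> S" using less.prems(3) unfolding F'_def by blast
        have "x \<notin> e" using e unfolding F'_def by blast
        thus "\<exists>u v. e = {u, v} \<and> u \<noteq> v \<and> u \<in> S' \<and> v \<in> S'" using pq unfolding S'_def by blast
      qed
    qed
    have "F = F' \<union> {e\<in>F. x \<in> e}" unfolding F'_def by blast
    hence "card F \<le> card F' + card {e\<in>F. x \<in> e}" by (metis card_Un_le)
    thus ?thesis using IH dx cS cS1 by linarith
  qed
qed

lemma arb_witness:
  assumes "finite V" "simple_graph V E"
  shows "\<exists>F :: nat \<Rightarrow> nat set set. (\<Union>i<arboricity E. F i) = E \<and> (\<forall>i<arboricity E. is_forest (F i))"
proof -
  have "E \<subseteq> Pow V" using assms(2) unfolding simple_graph_def by auto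
  hence "finite E" using assms(1) by (meson finite_Pow_iff finite_subset)
  then obtain es where es: "set es = E" "distinct es" using finite_distinct_list by blast
  define P where "P = (\<lambda>k. \<exists>F :: nat \<Rightarrow> nat set set. (\<Union>i<k. F i) = E \<and> (\<forall>i<k. is_forest (F i)))"
  have "(\<Union>i<length es. {es ! i}) = set es" by (auto simp: in_set_conv_nth)
  hence "(\<Union>i<length es. {es ! i}) = E" using es(1) by simp
  moreover have "\<forall>i<length es. is_forest {es!i}" using forest_single by blast
  ultimately have "P (length es)" unfolding P_def by blast
  hence "P (Least P)" by (rule LeastI)
  thus ?thesis unfolding arboricity_def P_def .
qed
lemma arb_bound:
  assumes "finite V" "simple_graph V E" "arboricity E = a" "finite U"
  shows "card {e\<in>E. e \<subseteq> U} \<le> a * (card U - 1)"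
proof -
  obtain F where F: "(\<Union>i<a. F i) = E" "\<forall>i<a. is_forest (F i)"
    using arb_witness[OF assms(1,2)] assms(3) by blast
  have "{e\<in>E. e \<subseteq> U} = (\<Union>i<a. {e\<in>F i. e \<subseteq> U})" using F(1) by blast
  hence "card {e\<in>E. e \<subseteq> U} \<le> (\<Sum>i<a. card {e\<in>F i. e \<subseteq> U})"
    using card_UN_le[of "{..<a}" "\<lambda>i. {e\<in>F i. e \<subseteq> U}"] by simp
  also have "\<dots> \<le> (\<Sum>i<a. card U - 1)"
  proof (rule sum_mono)
    fix i assume i: "i \<in> {..<a}"
    show "card {e\<in>F i. e \<subseteq> U} \<le> card U - 1"
    proof (rule forest_card[OF assms(4)])
      show "is_forest {e\<in>F i. e \<subseteq> U}" using F(2) i by (rule_tac forest_subset[of "F i"]) auto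
      show "\<forall>e\<in>{e\<in>F i. e \<subseteq> U}. \<exists>u v. e = {u, v} \<and> u \<noteq> v \<and> u \<in> U \<and> v \<in> U"
      proof
        fix e assume e: "e \<in> {e\<in>F i. e \<subseteq> U}"
        hence "e \<in> E" using F(1) i by blast
        then obtain u v where "e = {u,v}" "u \<noteq> v" using assms(2) unfolding simple_graph_def by blast
        thus "\<exists>u v. e = {u, v} \<and> u \<noteq> v \<and> u \<in> U \<and> v \<in> U" using e by blast
      qed
    qed
  qed
  also have "\<dots> = a * (card U - 1)" by simp
  finally show ?thesis .
qed

lemma nbr_edges_bij:
  assumes "\<forall>e\<in>E. \<exists>u v. e = {u,v} \<and> u \<noteq> v" "x \<in> U"
  shows "card (nbrs E x \<inter> U) = card {e\<in>E. e \<subseteq> U \<and> x \<in> e}"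
proof (rule bij_betw_same_card[of "\<lambda>u. {u, x}"])
  show "bij_betw (\<lambda>u. {u, x}) (nbrs E x \<inter> U) {e \<in> E. e \<subseteq> U \<and> x \<in> e}"
  proof (rule bij_betwI')
    fix u w assume "u \<in> nbrs E x \<inter> U" "w \<in> nbrs E x \<inter> U"
    show "({u, x} = {w, x}) = (u = w)" by (auto simp: doubleton_eq_iff)
  next
    fix u assume u: "u \<in> nbrs E x \<inter> U"
    hence "{u, x} \<in> E" "u \<in> U" unfolding nbrs_def by auto
    thus "{u, x} \<in> {e \<in> E. e \<subseteq> U \<and> x \<in> e}" using assms(2) by simp
  next
    fix e assume e: "e \<in> {e \<in> E. e \<subseteq> U \<and> x \<in> e}"
    hence eE: "e \<in> E" and eU: "e \<subseteq> U" and xe: "x \<in> e" by auto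
    then obtain p q where pq: "e = {p,q}" "p \<noteq> q" using assms(1) by blast
    obtain r where r: "e = {r, x}"
    proof (cases "x = p")
      case True
      hence "e = {q, x}" using pq by (simp add: insert_commute)
      thus ?thesis using that by blast
    next
      case False
      hence "x = q" using xe pq by simp
      thus ?thesis using that pq by blast
    qed
    have "r \<in> nbrs E x" unfolding nbrs_def using r eE by simp
    moreover have "r \<in> U" using r eU by simp
    ultimately show "\<exists>u\<in>nbrs E x \<inter> U. e = {u, x}" using r by blast
  qed
qed

lemma handshake:
  assumes "finite U" "\<forall>e\<in>E. \<exists>u v. e = {u,v} \<and> u \<noteq> v"
  shows "(\<Sum>x\<in>U. card (nbrs E x \<inter> U)) = 2 * card {e\<in>E. e \<subseteq> U}"
proof -
  define EU where "EU = {e\<in>E. e \<subseteq> U}"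
  have "EU \<subseteq> Pow U" unfolding EU_def by auto
  hence fEU: "finite EU" using assms(1) by (meson finite_Pow_iff finite_subset)
  have "(\<Sum>x\<in>U. card (nbrs E x \<inter> U)) = (\<Sum>x\<in>U. card {e\<in>EU. x \<in> e})"
  proof (rule sum.cong[OF refl])
    fix x assume "x \<in> U"
    from nbr_edges_bij[OF assms(2) this] show "card (nbrs E x \<inter> U) = card {e\<in>EU. x \<in> e}"
      unfolding EU_def by (simp add: conj_assoc)
  qed
  also have "\<dots> = (\<Sum>x\<in>U. \<Sum>e\<in>EU. if x \<in> e then 1 else 0)"
  proof (rule sum.cong[OF refl])
    fix x
    show "card {e\<in>EU. x \<in> e} = (\<Sum>e\<in>EU. if x \<in> e then 1 else 0)"
      using sum.inter_filter[OF fEU, of "\<lambda>_. 1::nat" "\<lambda>e. x \<in> e"] by simp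
  qed
  also have "\<dots> = (\<Sum>e\<in>EU. \<Sum>x\<in>U. if x \<in> e then 1 else 0)" by (rule sum.swap)
  also have "\<dots> = (\<Sum>e\<in>EU. card (U \<inter> e))"
  proof (rule sum.cong[OF refl])
    fix e
    have "{x\<in>U. x \<in> e} = U \<inter> e" by blast
    thus "(\<Sum>x\<in>U. if x \<in> e then 1 else 0) = card (U \<inter> e)"
      using sum.inter_filter[OF assms(1), of "\<lambda>_. 1::nat" "\<lambda>x. x \<in> e"] by simp
  qed
  also have "\<dots> = (\<Sum>e\<in>EU. 2)"
  proof (intro sum.cong refl)
    fix e assume "e \<in> EU"
    hence eE: "e \<in> E" and eU: "e \<subseteq> U" unfolding EU_def by auto
    obtain u v where "e = {u,v}" "u \<noteq> v" using assms(2) eE by blast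
    moreover have "U \<inter> e = e" using eU by blast
    ultimately show "card (U \<inter> e) = 2" by simp
  qed
  finally show ?thesis unfolding EU_def by simp
qed

lemma low_degree:
  assumes "finite U" "U \<noteq> {}" "\<forall>e\<in>E. \<exists>u v. e = {u,v} \<and> u \<noteq> v"
    "card {e\<in>E. e \<subseteq> U} \<le> a * (card U - 1)" "1 \<le> a"
  shows "\<exists>x\<in>U. card (nbrs E x \<inter> U) < 2 * a"
proof (rule ccontr)
  assume "\<not> ?thesis"
  hence "\<forall>x\<in>U. 2 * a \<le> card (nbrs E x \<inter> U)" by auto
  hence "(\<Sum>x\<in>U. 2 * a) \<le> (\<Sum>x\<in>U. card (nbrs E x \<inter> U))" by (intro sum_mono) auto
  hence "card U * (2 * a) \<le> 2 * card {e\<in>E. e \<subseteq> U}" using handshake[OF assms(1,3)] by simp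
  also have "\<dots> \<le> 2 * (a * (card U - 1))" using assms(4) by simp
  finally have "card U * (2 * a) \<le> 2 * (a * (card U - 1))" .
  moreover have "card U > 0" using assms(1,2) by (simp add: card_gt_0_iff)
  ultimately obtain c where c: "card U = Suc c" by (metis gr0_implies_Suc)
  have "Suc c * (2 * a) \<le> 2 * (a * c)" using \<open>card U * (2 * a) \<le> 2 * (a * (card U - 1))\<close> c by simp
  hence "a = 0" by (simp add: algebra_simps)
  thus False using assms(5) by simp
qed

lemma color_exists:
  fixes E :: "nat set set" and T :: "nat set"
  assumes "finite T" "1 \<le> a" "\<forall>e\<in>E. \<exists>u v. e = {u,v} \<and> u \<noteq> v"
    "\<forall>U. U \<subseteq> T \<longrightarrow> card {e\<in>E. e \<subseteq> U} \<le> a * (card U - 1)"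
  shows "\<exists>c. (\<forall>x\<in>T. c x < 2 * a) \<and> (\<forall>x\<in>T. \<forall>y\<in>T. {x,y} \<in> E \<longrightarrow> c x \<noteq> c y)"
  using assms(1,4)
proof (induction "card T" arbitrary: T rule: less_induct)
  case less
  show ?case
  proof (cases "T = {}")
    case True thus ?thesis by simp
  next
    case False
    obtain x where xT: "x \<in> T" and lowx: "card (nbrs E x \<inter> T) < 2 * a"
      using low_degree[OF less.prems(1) False assms(3) _ assms(2)] less.prems(2) by blast
    define T' where "T' = T - {x}"
    have fT': "finite T'" unfolding T'_def using less.prems(1) by simp
    have lt: "card T' < card T" unfolding T'_def using xT less.prems(1) by (meson card_Diff1_less)
    have "\<forall>U. U \<subseteq> T' \<longrightarrow> card {e\<in>E. e \<subseteq> U} \<le> a * (card U - 1)"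
      using less.prems(2) unfolding T'_def by blast
    then obtain c where c1: "\<forall>x\<in>T'. c x < 2 * a"
      and c2: "\<forall>x\<in>T'. \<forall>y\<in>T'. {x,y} \<in> E \<longrightarrow> c x \<noteq> c y"
      using less.hyps[OF lt fT'] by blast
    define NC where "NC = c ` (nbrs E x \<inter> T')"
    have "card NC \<le> card (nbrs E x \<inter> T')" unfolding NC_def
      by (rule card_image_le) (simp add: fT')
    also have "\<dots> \<le> card (nbrs E x \<inter> T)" unfolding T'_def
      using less.prems(1) by (intro card_mono) auto
    finally have "card NC < card {0..<2*a}" using lowx by simp
    have fNC: "finite NC" unfolding NC_def using fT' by simp
    have "\<not> {0..<2*a} \<subseteq> NC"
    proof
      assume "{0..<2*a} \<subseteq> NC"
      hence "card {0..<2*a} \<le> card NC" by (rule card_mono[OF fNC])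
      thus False using \<open>card NC < card {0..<2*a}\<close> by simp
    qed
    then obtain k where k: "k \<in> {0..<2*a}" "k \<notin> NC" by blast
    define c' where "c' = c(x := k)"
    have loop: "\<And>y. {y, y} \<notin> E"
    proof
      fix y assume "{y,y} \<in> E"
      from bspec[OF assms(3) this] obtain p q where "{y,y} = {p,q}" "p \<noteq> q" by blast
      thus False by (simp add: doubleton_eq_iff)
    qed
    have "(\<forall>x\<in>T. c' x < 2 * a) \<and> (\<forall>x\<in>T. \<forall>y\<in>T. {x,y} \<in> E \<longrightarrow> c' x \<noteq> c' y)"
    proof (intro conjI ballI impI)
      fix y assume "y \<in> T"
      thus "c' y < 2 * a" using c1 k unfolding c'_def T'_def by auto
    next
      fix y z assume yz: "y \<in> T" "z \<in> T" "{y, z} \<in> E"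
      show "c' y \<noteq> c' z"
      proof (cases "y = x")
        case True
        hence "z \<noteq> x" using yz loop by blast
        hence "z \<in> nbrs E x \<inter> T'" using yz True unfolding nbrs_def T'_def by (simp add: insert_commute)
        hence "c z \<in> NC" unfolding NC_def by blast
        thus ?thesis using k True \<open>z \<noteq> x\<close> unfolding c'_def by auto
      next
        case False
        show ?thesis
        proof (cases "z = x")
          case True
          hence "y \<in> nbrs E x \<inter> T'" using yz False unfolding nbrs_def T'_def by simp
          hence "c y \<in> NC" unfolding NC_def by blast
          thus ?thesis using k True False unfolding c'_def by auto
        next
          case False2: False
          thus ?thesis using c2 yz False unfolding c'_def T'_def by auto
        qed
      qed
    qed
    thus ?thesis by blast
  qed
qed

definition sz :: "nat \<Rightarrow> nat \<Rightarrow> nat" where "sz n a = n div a + 1"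
definition grp :: "nat \<Rightarrow> nat \<Rightarrow> nat \<Rightarrow> nat" where "grp n a i = i div sz n a"

definition Lr :: "nat \<Rightarrow> nat \<Rightarrow> nat list \<Rightarrow> nat \<Rightarrow> nat list" where
  "Lr n a row i = filter (\<lambda>j. row ! j = 1 \<and> grp n a j = grp n a i) [0..<n]"

definition offs :: "nat \<Rightarrow> nat \<Rightarrow> nat list \<Rightarrow> nat \<Rightarrow> nat" where
  "offs n a dl i = sum_list (map (\<lambda>k. dl ! k) (filter (\<lambda>k. grp n a k = grp n a i) [0..<i]))"

definition MG :: "nat \<Rightarrow> nat \<Rightarrow> nat list \<Rightarrow> nat \<Rightarrow> nat" where
  "MG n a dl G = sum_list (map (\<lambda>k. dl ! k) (filter (\<lambda>k. grp n a k = G) [0..<n]))"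

definition ownr :: "nat \<Rightarrow> nat \<Rightarrow> nat list \<Rightarrow> nat \<Rightarrow> nat \<Rightarrow> nat" where
  "ownr n a dl G x = (THE i. i < n \<and> grp n a i = G \<and> offs n a dl i \<le> x \<and> x < offs n a dl i + dl ! i)"

definition val2 :: "nat \<Rightarrow> nat \<Rightarrow> nat list \<Rightarrow> nat list \<Rightarrow> nat \<Rightarrow> nat \<Rightarrow> nat" where
  "val2 n a dl L i h = (case find (\<lambda>k. (offs n a dl i + k) mod n = h) [0..<length L] of
      None \<Rightarrow> 0 | Some k \<Rightarrow> Suc (L ! k))"

definition itm :: "nat \<Rightarrow> nat \<Rightarrow> nat list \<Rightarrow> nat list \<Rightarrow> nat \<Rightarrow> nat \<Rightarrow> nat" where
  "itm n a dl w2 G x = (if x < MG n a dl G then w2 ! (ownr n a dl G x) else 0)"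

definition msg3 :: "nat \<Rightarrow> nat \<Rightarrow> nat list \<Rightarrow> nat list \<Rightarrow> nat \<Rightarrow> nat \<Rightarrow> nat" where
  "msg3 n a dl w2 h m = min (itm n a dl w2 (grp n a m) h) n
      + (n + 1) * min (itm n a dl w2 (grp n a m) (h + n)) n"

definition vl :: "nat \<Rightarrow> nat list \<Rightarrow> nat \<Rightarrow> nat" where
  "vl n w3 x = (w3 ! (x mod n) div (n + 1) ^ (x div n)) mod (n + 1) - 1"

definition SG :: "nat list \<Rightarrow> nat \<Rightarrow> nat \<Rightarrow> nat \<Rightarrow> nat set" where
  "SG vs n a G = {vs ! i | i. i < n \<and> grp n a i = G}"

definition REb :: "nat list \<Rightarrow> nat \<Rightarrow> nat \<Rightarrow> nat list \<Rightarrow> nat list \<Rightarrow> nat \<Rightarrow> nat set set" where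
  "REb vs n a dl w3 G = {{vs ! i, vs ! (vl n w3 (offs n a dl i + k))} | i k.
      i < n \<and> grp n a i = G \<and> k < dl ! i}"

definition colf :: "nat set \<Rightarrow> nat set set \<Rightarrow> nat \<Rightarrow> nat \<Rightarrow> nat" where
  "colf S R a = (SOME c. (\<forall>x\<in>S. c x < 2 * a) \<and> (\<forall>x\<in>S. \<forall>y\<in>S. {x,y} \<in> R \<longrightarrow> c x \<noteq> c y))"

definition rnk :: "nat list \<Rightarrow> nat \<Rightarrow> nat" where
  "rnk xs w = length (takeWhile (\<lambda>u. u \<noteq> w) xs)"

definition blk :: "nat list \<Rightarrow> nat \<Rightarrow> nat list" where
  "blk s k = take (s ! 3) (drop (4 + k * (s ! 3)) s)"

definition me_i :: "nat list \<Rightarrow> nat" where "me_i s = rnk (blk s 0) (s ! 2)"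

definition myL :: "nat list \<Rightarrow> nat list" where
  "myL s = Lr (s ! 3) (s ! 1) (blk s 1) (me_i s)"

definition Dloc :: "nat list \<Rightarrow> nat list" where
  "Dloc s = map (\<lambda>i. if i = me_i s then length (myL s) else blk s 2 ! i) [0..<s ! 3]"

definition W2 :: "nat list \<Rightarrow> nat list" where
  "W2 s = map (\<lambda>i. if i = me_i s then min (val2 (s!3) (s!1) (Dloc s) (myL s) (me_i s) (me_i s)) (s!3)
      else blk s 3 ! i) [0..<s ! 3]"

definition W3 :: "nat list \<Rightarrow> nat list" where
  "W3 s = map (\<lambda>h. if h = me_i s then msg3 (s!3) (s!1) (Dloc s) (W2 s) (me_i s) (me_i s)
      else blk s 4 ! h) [0..<s ! 3]"

definition snd_f :: "nat list \<Rightarrow> nat \<Rightarrow> nat" where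
  "snd_f s w = (let n = s ! 3; a = s ! 1; i = me_i s; j = rnk (blk s 0) w in
     if s ! 0 = 0 then min (length (myL s)) n
     else if s ! 0 = 1 then min (val2 n a (Dloc s) (myL s) i j) n
     else if s ! 0 = 2 then msg3 n a (Dloc s) (W2 s) i j
     else 0)"

definition stp :: "nat list \<Rightarrow> (nat \<Rightarrow> nat) \<Rightarrow> nat list" where
  "stp s r = Suc (s ! 0) # tl s @ map r (blk s 0)"

definition ini :: "nat \<Rightarrow> nat \<Rightarrow> nat set \<Rightarrow> nat \<Rightarrow> nat set \<Rightarrow> nat list" where
  "ini n0 a V v N = [0, a, v, length (sorted_list_of_set V)] @ sorted_list_of_set V
     @ map (\<lambda>u. if u \<in> N then 1 else 0) (sorted_list_of_set V)"

definition outf :: "nat list \<Rightarrow> nat" where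
  "outf s = (let n = s ! 3; a = s ! 1; G = grp n a (me_i s) in
     G * (2 * a) + colf (SG (blk s 0) n a G) (REb (blk s 0) n a (Dloc s) (W3 s) G) a (s ! 2) + 1)"

definition Alg :: "nat list cc_alg" where
  "Alg = \<lparr> cc_init = ini, cc_send = snd_f, cc_step = stp, cc_out = outf \<rparr>"

lemma blk_stp_old:
  assumes "4 + (k + 1) * (s ! 3) \<le> length s"
  shows "blk (stp s r) k = blk s k"
proof -
  have l4: "4 \<le> length s" using assms by simp
  have ne: "s \<noteq> []" using l4 by auto
  have e: "stp s r = s[0 := Suc (s!0)] @ map r (blk s 0)" unfolding stp_def using ne
    by (cases s) auto
  have n3: "stp s r ! 3 = s ! 3" unfolding e using l4 by (simp add: nth_append)
  show ?thesis unfolding blk_def n3 unfolding e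
    using assms by (simp add: drop_update_cancel)
qed

lemma blk_stp_new:
  assumes "length s = 4 + k * (s ! 3)" "1 \<le> k"
  shows "blk (stp s r) k = map r (blk s 0)"
proof -
  have l4: "4 \<le> length s" using assms by simp
  have ne: "s \<noteq> []" using l4 by auto
  have e: "stp s r = s[0 := Suc (s!0)] @ map r (blk s 0)" unfolding stp_def using ne
    by (cases s) auto
  have n3: "stp s r ! 3 = s ! 3" unfolding e using l4 by (simp add: nth_append)
  have "s ! 3 \<le> k * (s ! 3)" using assms(2) by simp
  hence lb: "length (blk s 0) = s ! 3" unfolding blk_def using assms by simp
  show ?thesis unfolding blk_def n3 unfolding e
    using assms lb by (simp add: drop_update_cancel blk_def)
qed

lemma stp_nth:
  assumes "4 + s ! 3 \<le> length s"
  shows "stp s r ! 0 = Suc (s ! 0)" "stp s r ! 1 = s ! 1" "stp s r ! 2 = s ! 2" "stp s r ! 3 = s ! 3"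
    "length (stp s r) = length s + s ! 3"
proof -
  have l4: "4 \<le> length s" using assms by simp
  have ne: "s \<noteq> []" using l4 by auto
  have e: "stp s r = s[0 := Suc (s!0)] @ map r (blk s 0)" unfolding stp_def using ne
    by (cases s) auto
  show "stp s r ! 0 = Suc (s ! 0)" "stp s r ! 1 = s ! 1" "stp s r ! 2 = s ! 2" "stp s r ! 3 = s ! 3"
    unfolding e using l4 ne by (simp_all add: nth_append)
  have "length (blk s 0) = s ! 3" unfolding blk_def using assms by simp
  thus "length (stp s r) = length s + s ! 3" unfolding e by simp
qed

lemma rnk_nth: "distinct xs \<Longrightarrow> i < length xs \<Longrightarrow> rnk xs (xs ! i) = i"
proof (induction xs arbitrary: i)
  case Nil thus ?case by simp
next
  case (Cons x xs)
  show ?case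
  proof (cases i)
    case 0 thus ?thesis by (simp add: rnk_def)
  next
    case (Suc j)
    have "xs ! j \<noteq> x" using Cons.prems Suc by (metis distinct.simps(2) nth_mem Suc_less_eq length_Cons)
    thus ?thesis using Cons Suc by (simp add: rnk_def)
  qed
qed

locale setting =
  fixes V :: "nat set" and E :: "nat set set" and a :: nat
  assumes finV: "finite V" and neV: "V \<noteq> {}" and sg: "simple_graph V E"
    and arb: "arboricity E = a" and a2: "2 \<le> a"
begin

definition vs where "vs = sorted_list_of_set V"
definition n where "n = card V"
definition rowv where "rowv v = map (\<lambda>u. if u \<in> nbrs E v then 1 else (0::nat)) vs"
abbreviation run where "run t v \<equiv> cc_run Alg a V E t v"

lemma vs_props: "distinct vs" "sorted vs" "set vs = V" "length vs = n"
  unfolding vs_def n_def using finV by auto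

lemma Alg_sel: "cc_send Alg = snd_f" "cc_step Alg = stp" "cc_out Alg = outf" "cc_init Alg = ini"
  by (simp_all add: Alg_def)

lemma drop4: "drop (4 + m) (p # q # r # w # xs) = drop m xs"
  by (simp add: eval_nat_numeral)

lemma run0: "run 0 v = [0, a, v, n] @ vs @ rowv v"
  by (simp add: Alg_sel ini_def vs_def n_def rowv_def finV)

lemma run_Suc: "run (Suc t) v = stp (run t v) (\<lambda>u. if u \<in> V \<and> u \<noteq> v then snd_f (run t u) v else 0)"
  by (simp only: cc_run.simps Alg_sel)

lemma run_shape:
  "length (run t v) = 4 + (t + 2) * n \<and> run t v ! 0 = t \<and> run t v ! 1 = a \<and>
   run t v ! 2 = v \<and> run t v ! 3 = n"
proof (induction t)
  case 0 show ?case unfolding run0 using vs_props by (simp add: rowv_def)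
next
  case (Suc t)
  have "4 + run t v ! 3 \<le> length (run t v)" using Suc by simp
  from stp_nth[OF this] show ?case unfolding run_Suc using Suc by simp
qed

lemma run_blk01: "blk (run t v) 0 = vs" "blk (run t v) 1 = rowv v"
proof (induction t)
  case 0
  show "blk (run 0 v) 0 = vs" "blk (run 0 v) 1 = rowv v"
  proof -
    have "run 0 v ! 3 = n" unfolding run0 by simp
    moreover have "length (rowv v) = n" using vs_props by (simp add: rowv_def)
    ultimately show "blk (run 0 v) 0 = vs" "blk (run 0 v) 1 = rowv v"
      unfolding blk_def unfolding run0 using vs_props
      by (simp_all add: drop_append drop4)
  qed
next
  case (Suc t)
  have sh: "length (run t v) = 4 + (t + 2) * n" "run t v ! 3 = n" using run_shape by auto
  show "blk (run (Suc t) v) 0 = vs" unfolding run_Suc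
    using Suc(1) sh by (subst blk_stp_old) auto
  show "blk (run (Suc t) v) 1 = rowv v" unfolding run_Suc
    using Suc(2) sh by (subst blk_stp_old) auto
qed

lemma run_blk:
  "k < t \<Longrightarrow> blk (run t v) (k + 2) = map (\<lambda>u. if u \<in> V \<and> u \<noteq> v then snd_f (run k u) v else 0) vs"
proof (induction t)
  case 0 thus ?case by simp
next
  case (Suc t)
  have sh: "length (run t v) = 4 + (t + 2) * n" "run t v ! 3 = n" using run_shape by auto
  show ?case
  proof (cases "k < t")
    case True
    have "(k+3)*n \<le> (t+2)*n" using True by (intro mult_le_mono1) simp
    hence "blk (run (Suc t) v) (k + 2) = blk (run t v) (k + 2)" unfolding run_Suc
      using True sh by (subst blk_stp_old) (auto simp: algebra_simps)
    thus ?thesis using Suc.IH[OF True] by simp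
  next
    case False
    hence kt: "k = t" using Suc.prems by simp
    show ?thesis unfolding run_Suc kt
      using sh by (subst blk_stp_new) (auto simp: run_blk01)
  qed
qed

definition Lt where "Lt i = Lr n a (rowv (vs ! i)) i"
definition dt where "dt i = length (Lt i)"
definition dl where "dl = map dt [0..<n]"
definition W2t where "W2t h = map (\<lambda>i. min (val2 n a dl (Lt i) i h) n) [0..<n]"
definition W3t where "W3t m = map (\<lambda>h. msg3 n a dl (W2t h) h m) [0..<n]"

lemma vs_inj: "i < n \<Longrightarrow> j < n \<Longrightarrow> (vs ! i = vs ! j) = (i = j)"
  using vs_props nth_eq_iff_index_eq by metis

lemma vs_in: "i < n \<Longrightarrow> vs ! i \<in> V"
  using vs_props nth_mem by metis

lemma dt_le: "dt i \<le> n"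
  unfolding dt_def Lt_def Lr_def using length_filter_le[of _ "[0..<n]"] by simp

lemma me_i_run: "m < n \<Longrightarrow> me_i (run t (vs ! m)) = m"
  unfolding me_i_def using run_blk01 run_shape rnk_nth vs_props by metis

lemma myL_run: "m < n \<Longrightarrow> myL (run t (vs ! m)) = Lt m"
  unfolding myL_def Lt_def using me_i_run run_blk01 run_shape by simp

lemma snd0: "m < n \<Longrightarrow> snd_f (run 0 (vs ! m)) w = dt m"
proof -
  assume m: "m < n"
  have z: "run 0 (vs ! m) ! 0 = 0" "run 0 (vs!m) ! 3 = n" using run_shape by blast+
  show ?thesis unfolding snd_f_def Let_def z using myL_run[OF m, of 0] dt_le[of m]
    by (simp del: cc_run.simps add: dt_def)
qed

lemma Dloc_run: assumes "m < n" "1 \<le> t" shows "Dloc (run t (vs ! m)) = dl"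
proof -
  have b: "blk (run t (vs ! m)) 2 = map (\<lambda>u. if u \<in> V \<and> u \<noteq> vs ! m then snd_f (run 0 u) (vs ! m) else 0) vs"
    using run_blk[of 0 t "vs ! m"] assms by (simp add: numeral_2_eq_2)
  show ?thesis unfolding Dloc_def dl_def
  proof (rule map_cong)
    show "[0..<run t (vs ! m) ! 3] = [0..<n]" using run_shape by simp
  next
    fix i assume "i \<in> set [0..<n]"
    hence i: "i < n" by simp
    show "(if i = me_i (run t (vs ! m)) then length (myL (run t (vs ! m))) else blk (run t (vs ! m)) 2 ! i) = dt i"
    proof (cases "i = m")
      case True thus ?thesis using me_i_run[OF assms(1)] myL_run[OF assms(1)] by (simp add: dt_def)
    next
      case False
      hence "vs ! i \<noteq> vs ! m" using vs_inj i assms(1) by simp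
      thus ?thesis using False me_i_run[OF assms(1)] b i vs_props vs_in[OF i] snd0[OF i] by simp
    qed
  qed
qed

lemma rnk_vs: "h < n \<Longrightarrow> rnk (blk (run t v) 0) (vs ! h) = h"
  using run_blk01 rnk_nth vs_props by metis

lemma snd1: assumes "m < n" "h < n"
  shows "snd_f (run 1 (vs ! m)) (vs ! h) = min (val2 n a dl (Lt m) m h) n"
proof -
  have z: "run 1 (vs ! m) ! 0 = 1" "run 1 (vs!m) ! 3 = n" "run 1 (vs!m) ! 1 = a" using run_shape by blast+
  show ?thesis unfolding snd_f_def Let_def z
    using myL_run[OF assms(1), of 1] Dloc_run[OF assms(1), of 1] me_i_run[OF assms(1), of 1]
      rnk_vs[OF assms(2), of 1]
    by (simp del: cc_run.simps)
qed

lemma W2_run: assumes "h < n" "2 \<le> t" shows "W2 (run t (vs ! h)) = W2t h"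
proof -
  have b: "blk (run t (vs ! h)) 3 = map (\<lambda>u. if u \<in> V \<and> u \<noteq> vs ! h then snd_f (run 1 u) (vs ! h) else 0) vs"
    using run_blk[of 1 t "vs ! h"] assms by (simp add: numeral_3_eq_3)
  have z: "run t (vs!h) ! 3 = n" "run t (vs!h) ! 1 = a" using run_shape by blast+
  show ?thesis unfolding W2_def W2t_def z
  proof (rule map_cong[OF refl])
    fix i assume "i \<in> set [0..<n]"
    hence i: "i < n" by simp
    have t1: "1 \<le> t" using assms by simp
    show "(if i = me_i (run t (vs ! h)) then min (val2 n a (Dloc (run t (vs ! h))) (myL (run t (vs ! h)))
            (me_i (run t (vs ! h))) (me_i (run t (vs ! h)))) n else blk (run t (vs ! h)) 3 ! i)
          = min (val2 n a dl (Lt i) i h) n"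
    proof (cases "i = h")
      case True thus ?thesis using me_i_run[OF assms(1)] myL_run[OF assms(1)] Dloc_run[OF assms(1) t1]
        by simp
    next
      case False
      hence "vs ! i \<noteq> vs ! h" using vs_inj i assms(1) by simp
      thus ?thesis using False me_i_run[OF assms(1)] b i vs_props vs_in[OF i] snd1[OF i assms(1)]
        by simp
    qed
  qed
qed

lemma snd2: assumes "m < n" "h < n"
  shows "snd_f (run 2 (vs ! h)) (vs ! m) = msg3 n a dl (W2t h) h m"
proof -
  have z: "run 2 (vs ! h) ! 0 = 2" "run 2 (vs!h) ! 3 = n" "run 2 (vs!h) ! 1 = a" using run_shape by blast+
  show ?thesis unfolding snd_f_def Let_def z
    using W2_run[OF assms(2), of 2] Dloc_run[OF assms(2), of 2] me_i_run[OF assms(2), of 2]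
      rnk_vs[OF assms(1), of 2]
    by (simp del: cc_run.simps)
qed

lemma W3_run: assumes "m < n" shows "W3 (run 3 (vs ! m)) = W3t m"
proof -
  have b: "blk (run 3 (vs ! m)) 4 = map (\<lambda>u. if u \<in> V \<and> u \<noteq> vs ! m then snd_f (run 2 u) (vs ! m) else 0) vs"
    using run_blk[of 2 3 "vs ! m"] by (simp add: eval_nat_numeral)
  have z: "run 3 (vs!m) ! 3 = n" "run 3 (vs!m) ! 1 = a" using run_shape by blast+
  show ?thesis unfolding W3_def W3t_def z
  proof (rule map_cong[OF refl])
    fix h assume "h \<in> set [0..<n]"
    hence h: "h < n" by simp
    show "(if h = me_i (run 3 (vs ! m)) then msg3 n a (Dloc (run 3 (vs ! m))) (W2 (run 3 (vs ! m)))
            (me_i (run 3 (vs ! m))) (me_i (run 3 (vs ! m))) else blk (run 3 (vs ! m)) 4 ! h)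
          = msg3 n a dl (W2t h) h m"
    proof (cases "h = m")
      case True thus ?thesis using me_i_run[OF assms(1)] W2_run[OF assms(1)] Dloc_run[OF assms(1)]
        by simp
    next
      case False
      hence "vs ! h \<noteq> vs ! m" using vs_inj h assms(1) by simp
      thus ?thesis using False me_i_run[OF assms(1)] b h vs_props vs_in[OF h] snd2[OF assms(1) h]
        by simp
    qed
  qed
qed

end

lemma filter_split3:
  assumes "i1 < i2"
  shows "filter P [0..<i2] = filter P [0..<i1] @ filter P [i1] @ filter P [Suc i1..<i2]"
proof -
  have "[0..<i2] = [0..<i1] @ [i1..<i2]" using upt_add_eq_append[of 0 i1 "i2-i1"] assms by simp
  also have "[i1..<i2] = i1 # [Suc i1..<i2]" using assms by (simp add: upt_conv_Cons)
  finally show ?thesis by simp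
qed

lemma offs_mono:
  assumes "i1 < i2" "grp n a i1 = grp n a i2"
  shows "offs n a dl i1 + dl ! i1 \<le> offs n a dl i2"
proof -
  let ?P = "\<lambda>k. grp n a k = grp n a i2"
  have "offs n a dl i2 = sum_list (map (\<lambda>k. dl ! k) (filter ?P [0..<i1])) + dl ! i1
     + sum_list (map (\<lambda>k. dl ! k) (filter ?P [Suc i1..<i2]))"
    unfolding offs_def filter_split3[OF assms(1)] using assms(2) by simp
  moreover have "offs n a dl i1 = sum_list (map (\<lambda>k. dl ! k) (filter ?P [0..<i1]))"
    unfolding offs_def using assms(2) by simp
  ultimately show ?thesis by simp
qed

lemma offs_MG:
  assumes "i < n" "grp n a i = G"
  shows "offs n a dl i + dl ! i \<le> MG n a dl G"
proof -
  let ?P = "\<lambda>k. grp n a k = G"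
  have "MG n a dl G = sum_list (map (\<lambda>k. dl ! k) (filter ?P [0..<i])) + dl ! i
     + sum_list (map (\<lambda>k. dl ! k) (filter ?P [Suc i..<n]))"
    unfolding MG_def filter_split3[OF assms(1)] using assms(2) by simp
  moreover have "offs n a dl i = sum_list (map (\<lambda>k. dl ! k) (filter ?P [0..<i]))"
    unfolding offs_def using assms(2) by simp
  ultimately show ?thesis by simp
qed

lemma ownr_eq:
  assumes "i < n" "grp n a i = G" "offs n a dl i \<le> x" "x < offs n a dl i + dl ! i"
  shows "ownr n a dl G x = i"
  unfolding ownr_def
proof (rule the_equality)
  show "i < n \<and> grp n a i = G \<and> offs n a dl i \<le> x \<and> x < offs n a dl i + dl ! i" using assms by simp
next
  fix j assume j: "j < n \<and> grp n a j = G \<and> offs n a dl j \<le> x \<and> x < offs n a dl j + dl ! j"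
  show "j = i"
  proof (rule ccontr)
    assume "j \<noteq> i"
    hence "j < i \<or> i < j" by arith
    thus False
    proof
      assume "j < i"
      hence "offs n a dl j + dl ! j \<le> offs n a dl i" using offs_mono[of j i n a dl] j assms(2) by simp
      thus False using j assms by linarith
    next
      assume "i < j"
      hence "offs n a dl i + dl ! i \<le> offs n a dl j" using offs_mono[of i j n a dl] j assms(2) by simp
      thus False using j assms by linarith
    qed
  qed
qed

lemma val2_eq:
  assumes "k < length L" "length L \<le> n"
  shows "val2 n a dl L i ((offs n a dl i + k) mod n) = Suc (L ! k)"
proof -
  let ?P = "\<lambda>k'. (offs n a dl i + k') mod n = (offs n a dl i + k) mod n"
  have "k < length [0..<length L] \<and> ?P ([0..<length L] ! k) \<and> k = [0..<length L] ! k \<and>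
      (\<forall>j<k. \<not> ?P ([0..<length L] ! j))"
  proof (intro conjI allI impI)
    show "k < length [0..<length L]" using assms by simp
    show "k = [0..<length L] ! k" using assms by simp
    show "?P ([0..<length L] ! k)" using assms by simp
    fix j assume j: "j < k"
    show "\<not> ?P ([0..<length L] ! j)"
    proof
      assume "?P ([0..<length L] ! j)"
      hence "(offs n a dl i + k) mod n = (offs n a dl i + j) mod n" using j assms by simp
      hence "n dvd (offs n a dl i + k) - (offs n a dl i + j)" using j by (subst mod_eq_dvd_iff_nat[symmetric]) auto
      hence "n dvd (k - j)" by simp
      moreover have "0 < k - j" "k - j < n" using j assms by auto
      ultimately show False using nat_dvd_not_less by blast
    qed
  qed
  hence "find ?P [0..<length L] = Some k" unfolding find_Some_iff by blast
  thus ?thesis unfolding val2_def by simp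
qed

context setting
begin

lemma n_pos: "0 < n" unfolding n_def using finV neV by (simp add: card_gt_0_iff)

lemma rowv_nth: "j < n \<Longrightarrow> rowv v ! j = (if {vs ! j, v} \<in> E then 1 else 0)"
  unfolding rowv_def nbrs_def using vs_props by simp

lemma Lt_set: "i < n \<Longrightarrow> set (Lt i) = {j. j < n \<and> {vs ! j, vs ! i} \<in> E \<and> grp n a j = grp n a i}"
  unfolding Lt_def Lr_def using rowv_nth by (auto split: if_splits)

lemma Lt_lt: "i < n \<Longrightarrow> k < dt i \<Longrightarrow> Lt i ! k < n"
  using Lt_set unfolding dt_def by (metis (no_types, lifting) mem_Collect_eq nth_mem)

lemma dl_nth: "k < n \<Longrightarrow> dl ! k = dt k"
  unfolding dl_def by simp

lemma SG_img: "SG vs n a G = (\<lambda>i. vs ! i) ` {i. i < n \<and> grp n a i = G}"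
  unfolding SG_def by auto

lemma dt_card: assumes "i < n" shows "dt i = card (nbrs E (vs ! i) \<inter> SG vs n a (grp n a i))"
proof -
  let ?J = "{j. j < n \<and> {vs ! j, vs ! i} \<in> E \<and> grp n a j = grp n a i}"
  have "dt i = card (set (Lt i))" unfolding dt_def Lt_def Lr_def by (simp add: distinct_card[symmetric])
  also have "\<dots> = card ?J" using Lt_set[OF assms] by simp
  also have "\<dots> = card ((\<lambda>j. vs ! j) ` ?J)"
    by (rule card_image[symmetric]) (auto intro: inj_onI simp: vs_inj)
  also have "(\<lambda>j. vs ! j) ` ?J = nbrs E (vs ! i) \<inter> SG vs n a (grp n a i)"
  proof
    show "(\<lambda>j. vs ! j) ` ?J \<subseteq> nbrs E (vs ! i) \<inter> SG vs n a (grp n a i)"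
      unfolding SG_img nbrs_def by blast
    show "nbrs E (vs ! i) \<inter> SG vs n a (grp n a i) \<subseteq> (\<lambda>j. vs ! j) ` ?J"
    proof
      fix u assume u: "u \<in> nbrs E (vs ! i) \<inter> SG vs n a (grp n a i)"
      then obtain j where j: "j < n" "grp n a j = grp n a i" "u = vs ! j" unfolding SG_img by blast
      have "{u, vs ! i} \<in> E" using u unfolding nbrs_def by blast
      hence "j \<in> ?J" using j by simp
      thus "u \<in> (\<lambda>j. vs ! j) ` ?J" using j by blast
    qed
  qed
  finally show ?thesis .
qed

lemma MG_sum: "MG n a dl G = (\<Sum>i\<in>{i. i < n \<and> grp n a i = G}. dt i)"
proof -
  have "MG n a dl G = sum_list (map (\<lambda>k. dl ! k) (filter (\<lambda>k. grp n a k = G) [0..<n]))"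
    unfolding MG_def ..
  also have "\<dots> = sum (\<lambda>k. dl ! k) (set (filter (\<lambda>k. grp n a k = G) [0..<n]))"
    by (rule sum_list_distinct_conv_sum_set) simp
  also have "set (filter (\<lambda>k. grp n a k = G) [0..<n]) = {i. i < n \<and> grp n a i = G}" by auto
  also have "sum (\<lambda>k. dl ! k) {i. i < n \<and> grp n a i = G} = (\<Sum>i\<in>{i. i < n \<and> grp n a i = G}. dt i)"
    by (rule sum.cong) (auto simp: dl_nth)
  finally show ?thesis .
qed

lemma card_grp: "card {i. i < n \<and> grp n a i = G} \<le> sz n a"
proof -
  have "{i. i < n \<and> grp n a i = G} \<subseteq> {G * sz n a..<G * sz n a + sz n a}"
  proof
    fix i assume "i \<in> {i. i < n \<and> grp n a i = G}"
    hence "i div sz n a = G" unfolding grp_def by simp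
    moreover have "sz n a > 0" unfolding sz_def by simp
    ultimately have "G * sz n a + i mod sz n a = i" "i mod sz n a < sz n a"
      using div_mult_mod_eq[of i "sz n a"] by (simp_all add: mult.commute)
    thus "i \<in> {G * sz n a..<G * sz n a + sz n a}" by simp
  qed
  hence "card {i. i < n \<and> grp n a i = G} \<le> card {G * sz n a..<G * sz n a + sz n a}"
    by (intro card_mono) auto
  thus ?thesis by simp
qed

lemma simple_twoset: "\<forall>e\<in>E. \<exists>u v. e = {u,v} \<and> u \<noteq> v"
  using sg unfolding simple_graph_def by blast

lemma MG_le: "MG n a dl G \<le> 2 * n"
proof -
  let ?I = "{i. i < n \<and> grp n a i = G}"
  define S where "S = SG vs n a G"
  have S: "S = (\<lambda>i. vs ! i) ` ?I" unfolding S_def by (rule SG_img)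
  have inj: "inj_on (\<lambda>i. vs ! i) ?I" by (simp add: inj_on_def vs_inj)
  have fS: "finite S" unfolding S by simp
  have "MG n a dl G = (\<Sum>i\<in>?I. card (nbrs E (vs ! i) \<inter> S))"
    unfolding MG_sum S_def by (rule sum.cong[OF refl]) (simp add: dt_card)
  also have "\<dots> = (\<Sum>x\<in>(\<lambda>i. vs ! i) ` ?I. card (nbrs E x \<inter> S))"
    by (simp add: sum.reindex[OF inj])
  also have "\<dots> = (\<Sum>x\<in>S. card (nbrs E x \<inter> S))" unfolding S ..
  also have "\<dots> = 2 * card {e\<in>E. e \<subseteq> S}" by (rule handshake[OF fS simple_twoset])
  also have "\<dots> \<le> 2 * (a * (card S - 1))" using arb_bound[OF finV sg arb fS] by simp
  finally have 1: "MG n a dl G \<le> 2 * (a * (card S - 1))" .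
  have "card S \<le> sz n a"
    using card_grp[of G] card_image_le[of ?I "\<lambda>i. vs ! i"] unfolding S by simp
  hence "card S - 1 \<le> sz n a - 1" by simp
  hence "a * (card S - 1) \<le> a * (sz n a - 1)" by (rule mult_le_mono2)
  also have "a * (sz n a - 1) \<le> n" unfolding sz_def by simp
  finally show ?thesis using 1 by simp
qed

end

lemma digit_lemma:
  fixes A B n :: nat
  assumes "A \<le> n" "B \<le> n"
  shows "(A + (n + 1) * B) mod (n + 1) = A" "(A + (n + 1) * B) div (n + 1) = B"
proof -
  have "(A + (n + 1) * B) mod (n + 1) = A mod (n + 1)" by (metis mod_mult_self2)
  thus "(A + (n + 1) * B) mod (n + 1) = A" using assms by simp
  have "(A + (n + 1) * B) div (n + 1) = B + A div (n + 1)" by (metis div_mult_self2 add_eq_0_iff_both_eq_0 one_neq_zero)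
  thus "(A + (n + 1) * B) div (n + 1) = B" using assms by simp
qed

context setting
begin

lemma route:
  assumes m: "m < n" and i: "i < n" and g: "grp n a i = grp n a m" and k: "k < dt i"
  shows "vl n (W3t m) (offs n a dl i + k) = Lt i ! k"
proof -
  define G where "G = grp n a m"
  define x where "x = offs n a dl i + k"
  define h where "h = x mod n"
  have dli: "dl ! i = dt i" using dl_nth[OF i] .
  have xM: "x < MG n a dl G" using offs_MG[of i n a G dl] i g k dli unfolding x_def G_def by simp
  have x2: "x < 2 * n" using xM MG_le[of G] by simp
  have hn: "h < n" unfolding h_def using n_pos by simp
  have own: "ownr n a dl G x = i"
    using ownr_eq[of i n a G dl x] i g k dli unfolding x_def G_def by simp
  have lenL: "length (Lt i) = dt i" "dt i \<le> n" using dt_le by (simp_all add: dt_def)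
  have v2: "val2 n a dl (Lt i) i h = Suc (Lt i ! k)"
    unfolding h_def x_def using val2_eq[of k "Lt i" n a dl i] k lenL by simp
  have sl: "Suc (Lt i ! k) \<le> n" using Lt_lt[OF i k] by simp
  have itmx: "itm n a dl (W2t h) G x = Suc (Lt i ! k)"
    unfolding itm_def using xM own i v2 sl by (simp add: W2t_def)
  have w3: "W3t m ! h = msg3 n a dl (W2t h) h m" unfolding W3t_def using hn by simp
  let ?A = "min (itm n a dl (W2t h) G h) n"
  let ?B = "min (itm n a dl (W2t h) G (h + n)) n"
  have ms: "msg3 n a dl (W2t h) h m = ?A + (n + 1) * ?B" unfolding msg3_def G_def ..
  have AB: "?A \<le> n" "?B \<le> n" by simp_all
  show ?thesis
  proof (cases "x < n")
    case True
    hence "h = x" "x div n = 0" unfolding h_def by simp_all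
    hence "vl n (W3t m) x = (?A + (n + 1) * ?B) mod (n + 1) - 1"
      unfolding vl_def using w3 ms True by simp
    also have "\<dots> = ?A - 1" using digit_lemma[OF AB] by simp
    also have "?A = Suc (Lt i ! k)" using itmx sl \<open>h = x\<close> by simp
    finally show ?thesis unfolding x_def by simp
  next
    case False
    hence "x div n = 1" using x2 by (simp add: div_nat_eqI)
    moreover have "h + n = x" unfolding h_def using False x2
      by (metis \<open>x div n = 1\<close> div_mult_mod_eq mult_1 add.commute)
    ultimately have "vl n (W3t m) x = ((?A + (n + 1) * ?B) div (n + 1)) mod (n + 1) - 1"
      unfolding vl_def using w3 ms h_def by simp
    also have "\<dots> = ?B - 1" using digit_lemma[OF AB] AB by simp
    also have "?B = Suc (Lt i ! k)" using itmx sl \<open>h + n = x\<close> by simp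
    finally show ?thesis unfolding x_def by simp
  qed
qed

end

lemma msg3_le: "msg3 n a dl w2 h m \<le> n + (n + 1) * n"
  unfolding msg3_def by (intro add_mono mult_le_mono2) simp_all

lemma snd_bound:
  assumes "s ! 0 < 3"
  shows "snd_f s w < (s ! 3 + 1) ^ 2"
proof -
  let ?n = "s ! 3"
  have "snd_f s w \<le> ?n + (?n + 1) * ?n"
    unfolding snd_f_def Let_def using assms msg3_le by (auto simp: min_le_iff_disj)
  also have "\<dots> < (?n + 1) ^ 2" by (simp add: power2_eq_square algebra_simps)
  finally show ?thesis .
qed

context setting
begin

lemma grp_lt: "m < n \<Longrightarrow> grp n a m < a"
proof -
  assume m: "m < n"
  have "n < a * (n div a + 1)"
  proof -
    have e: "n div a * a + n mod a = n" by (rule div_mult_mod_eq)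
    have "n mod a < a" using a2 by simp
    moreover have "a * (n div a + 1) = n div a * a + a" by (simp add: algebra_simps)
    ultimately show ?thesis using e by linarith
  qed
  hence "m < a * sz n a" using m unfolding sz_def by simp
  thus ?thesis unfolding grp_def by (simp add: less_mult_imp_div_less mult.commute)
qed

lemma REb_eq:
  assumes m: "m < n"
  shows "REb vs n a dl (W3t m) (grp n a m) = {e\<in>E. e \<subseteq> SG vs n a (grp n a m)}"
proof
  let ?G = "grp n a m"
  show "REb vs n a dl (W3t m) ?G \<subseteq> {e\<in>E. e \<subseteq> SG vs n a ?G}"
  proof
    fix e assume "e \<in> REb vs n a dl (W3t m) ?G"
    then obtain i k where ik: "e = {vs ! i, vs ! (vl n (W3t m) (offs n a dl i + k))}"
      "i < n" "grp n a i = ?G" "k < dl ! i" unfolding REb_def by blast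
    have k: "k < dt i" using ik dl_nth by simp
    have "vl n (W3t m) (offs n a dl i + k) = Lt i ! k" using route[OF m ik(2) ik(3) k] .
    moreover have "Lt i ! k \<in> set (Lt i)" using k unfolding dt_def by simp
    ultimately obtain j where j: "vl n (W3t m) (offs n a dl i + k) = j" "j < n"
      "{vs ! j, vs ! i} \<in> E" "grp n a j = ?G" using Lt_set[OF ik(2)] ik(3) by auto
    have "e = {vs ! j, vs ! i}" using ik(1) j(1) by (simp add: insert_commute)
    moreover have "vs ! i \<in> SG vs n a ?G" "vs ! j \<in> SG vs n a ?G" unfolding SG_def
      using ik j by blast+
    ultimately show "e \<in> {e\<in>E. e \<subseteq> SG vs n a ?G}" using j(3) by simp
  qed
next
  let ?G = "grp n a m"
  show "{e\<in>E. e \<subseteq> SG vs n a ?G} \<subseteq> REb vs n a dl (W3t m) ?G"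
  proof
    fix e assume e: "e \<in> {e\<in>E. e \<subseteq> SG vs n a ?G}"
    hence eE: "e \<in> E" and eS: "e \<subseteq> SG vs n a ?G" by auto
    obtain u w where uw: "e = {u, w}" "u \<noteq> w" using bspec[OF simple_twoset eE] by blast
    have "u \<in> SG vs n a ?G" "w \<in> SG vs n a ?G" using uw eS by auto
    then obtain i j where ij: "u = vs ! i" "i < n" "grp n a i = ?G" "w = vs ! j" "j < n" "grp n a j = ?G"
      unfolding SG_def by blast
    have "{vs ! j, vs ! i} \<in> E" using eE uw ij by (simp add: insert_commute)
    hence "j \<in> set (Lt i)" using Lt_set[OF ij(2)] ij by simp
    then obtain k where k: "k < dt i" "Lt i ! k = j" unfolding dt_def by (metis in_set_conv_nth)
    have "vl n (W3t m) (offs n a dl i + k) = j" using route[OF m ij(2) ij(3) k(1)] k(2) by simp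
    moreover have "k < dl ! i" using k dl_nth ij by simp
    ultimately show "e \<in> REb vs n a dl (W3t m) ?G" unfolding REb_def using uw ij by blast
  qed
qed

lemma colf_props:
  fixes G
  defines "S \<equiv> SG vs n a G"
  shows "(\<forall>x\<in>S. colf S {e\<in>E. e \<subseteq> S} a x < 2 * a) \<and>
    (\<forall>x\<in>S. \<forall>y\<in>S. {x,y} \<in> {e\<in>E. e \<subseteq> S} \<longrightarrow> colf S {e\<in>E. e \<subseteq> S} a x \<noteq> colf S {e\<in>E. e \<subseteq> S} a y)"
proof -
  have fS: "finite S" unfolding S_def SG_img by simp
  have "\<exists>c. (\<forall>x\<in>S. c x < 2 * a) \<and> (\<forall>x\<in>S. \<forall>y\<in>S. {x,y} \<in> {e\<in>E. e \<subseteq> S} \<longrightarrow> c x \<noteq> c y)"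
  proof (rule color_exists[OF fS])
    show "1 \<le> a" using a2 by simp
    show "\<forall>e\<in>{e\<in>E. e \<subseteq> S}. \<exists>u v. e = {u, v} \<and> u \<noteq> v" using simple_twoset by blast
    show "\<forall>U. U \<subseteq> S \<longrightarrow> card {e\<in>{e\<in>E. e \<subseteq> S}. e \<subseteq> U} \<le> a * (card U - 1)"
    proof (intro allI impI)
      fix U assume U: "U \<subseteq> S"
      hence "{e\<in>{e\<in>E. e \<subseteq> S}. e \<subseteq> U} = {e\<in>E. e \<subseteq> U}" by blast
      moreover have "finite U" using U fS by (rule finite_subset)
      ultimately show "card {e\<in>{e\<in>E. e \<subseteq> S}. e \<subseteq> U} \<le> a * (card U - 1)"
        using arb_bound[OF finV sg arb] by simp
    qed
  qed
  thus ?thesis unfolding colf_def by (rule someI_ex)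
qed

lemma out_run:
  assumes m: "m < n"
  shows "outf (run 3 (vs ! m)) = grp n a m * (2 * a) +
     colf (SG vs n a (grp n a m)) {e\<in>E. e \<subseteq> SG vs n a (grp n a m)} a (vs ! m) + 1"
proof -
  have z: "run 3 (vs!m) ! 3 = n" "run 3 (vs!m) ! 1 = a" "run 3 (vs!m) ! 2 = vs ! m"
    using run_shape by blast+
  show ?thesis unfolding outf_def Let_def z
    using me_i_run[OF m, of 3] run_blk01(1)[of 3 "vs ! m"] Dloc_run[OF m, of 3] W3_run[OF m] REb_eq[OF m]
    by (simp del: cc_run.simps)
qed

end

lemma div_parts_eq:
  fixes g1 g2 c1 c2 q :: nat
  assumes "c1 < q" "c2 < q" "g1 * q + c1 = g2 * q + c2"
  shows "g1 = g2"
proof -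
  have "(g1 * q + c1) div q = g1" using assms(1) by simp
  moreover have "(g2 * q + c2) div q = g2" using assms(2) by simp
  ultimately show ?thesis using assms(3) by simp
qed

lemma out_bound:
  fixes g c a :: nat
  assumes "g < a" "c < 2 * a"
  shows "g * (2 * a) + c + 1 \<le> 2 * a * a"
proof -
  have "g * (2 * a) + c + 1 \<le> g * (2 * a) + 2 * a" using assms(2) by simp
  also have "\<dots> = (g + 1) * (2 * a)" by (simp add: algebra_simps)
  also have "\<dots> \<le> a * (2 * a)" using assms(1) by (intro mult_le_mono1) simp
  finally show ?thesis by (simp add: algebra_simps)
qed

lemma real_bound:
  fixes a :: nat and \<epsilon> :: real
  assumes "2 \<le> a" "\<epsilon> > 0" "x \<le> 2 * a * a"
  shows "real x \<le> 2 * real a powr (2 + \<epsilon>)"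
proof -
  have "real x \<le> real (2 * a * a)" using assms(3) by (rule of_nat_mono)
  also have "real (2 * a * a) = 2 * (real a) ^ 2" by (simp add: power2_eq_square)
  also have "(real a) ^ 2 = real a powr 2" by simp
  also have "real a powr 2 \<le> real a powr (2 + \<epsilon>)" using assms by (intro powr_mono) auto
  finally show ?thesis by simp
qed

theorem theorem4:
  fixes \<epsilon> :: real and cid :: nat
  assumes "\<epsilon> > 0"
  shows "\<exists>(A :: nat list cc_alg) (B :: nat) (C :: real) (K :: real) (T :: nat \<Rightarrow> nat).
    (\<forall>n. real (T n) \<le> C * (real (logstar n) + 1)) \<and>
    (\<forall>V E a. finite V \<and> V \<noteq> {} \<and> (\<forall>v\<in>V. v < (card V + 1) ^ cid) \<and>
        simple_graph V E \<and> arboricity E = a \<and> 2 \<le> a \<longrightarrow>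
       (\<forall>t < T (card V). \<forall>u\<in>V. \<forall>v\<in>V.
           cc_send A (cc_run A a V E t u) v < (card V + 1) ^ B) \<and>
       proper_coloring E (\<lambda>v. cc_out A (cc_run A a V E (T (card V)) v)) \<and>
       (\<forall>v\<in>V. 1 \<le> cc_out A (cc_run A a V E (T (card V)) v) \<and>
           real (cc_out A (cc_run A a V E (T (card V)) v)) \<le> K * real a powr (2 + \<epsilon>)))"
proof -
  have P1: "\<forall>n. real ((\<lambda>_. 3::nat) n) \<le> (3::real) * (real (logstar n) + 1)" by simp
  have P2: "\<forall>V E a. finite V \<and> V \<noteq> {} \<and> (\<forall>v\<in>V. v < (card V + 1) ^ cid) \<and>
        simple_graph V E \<and> arboricity E = a \<and> 2 \<le> a \<longrightarrow>
       (\<forall>t < (\<lambda>_. 3::nat) (card V). \<forall>u\<in>V. \<forall>v\<in>V.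
           cc_send Alg (cc_run Alg a V E t u) v < (card V + 1) ^ 2) \<and>
       proper_coloring E (\<lambda>v. cc_out Alg (cc_run Alg a V E ((\<lambda>_. 3::nat) (card V)) v)) \<and>
       (\<forall>v\<in>V. 1 \<le> cc_out Alg (cc_run Alg a V E ((\<lambda>_. 3::nat) (card V)) v) \<and>
           real (cc_out Alg (cc_run Alg a V E ((\<lambda>_. 3::nat) (card V)) v)) \<le> (2::real) * real a powr (2 + \<epsilon>))"
  proof (intro allI impI)
    fix V E a
    assume H: "finite V \<and> V \<noteq> {} \<and> (\<forall>v\<in>V. v < (card V + 1) ^ cid) \<and>
        simple_graph V E \<and> arboricity E = a \<and> 2 \<le> a"
    interpret S: setting V E a using H by unfold_locales auto
    have nV: "card V = S.n" unfolding S.n_def ..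
    have idx: "\<And>v. v \<in> V \<Longrightarrow> \<exists>m<S.n. v = S.vs ! m"
      using S.vs_props by (metis in_set_conv_nth)
    have outv: "\<And>m. m < S.n \<Longrightarrow> cc_out Alg (cc_run Alg a V E 3 (S.vs ! m)) =
        grp S.n a m * (2 * a) + colf (SG S.vs S.n a (grp S.n a m)) {e\<in>E. e \<subseteq> SG S.vs S.n a (grp S.n a m)} a (S.vs ! m) + 1"
      unfolding S.Alg_sel(3) by (rule S.out_run)
    have msgs: "\<forall>t < (\<lambda>_. 3::nat) (card V). \<forall>u\<in>V. \<forall>v\<in>V.
           cc_send Alg (cc_run Alg a V E t u) v < (card V + 1) ^ 2"
    proof (intro allI impI ballI)
      fix t u v assume t: "t < (\<lambda>_. 3::nat) (card V)"
      have z: "cc_run Alg a V E t u ! 0 = t" "cc_run Alg a V E t u ! 3 = S.n" using S.run_shape by blast+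
      have t3: "cc_run Alg a V E t u ! 0 < 3" using t z(1) by simp
      have "snd_f (cc_run Alg a V E t u) v < (cc_run Alg a V E t u ! 3 + 1) ^ 2" by (rule snd_bound[OF t3])
      thus "cc_send Alg (cc_run Alg a V E t u) v < (card V + 1) ^ 2"
        unfolding S.Alg_sel z(2) nV .
    qed
    have proper: "proper_coloring E (\<lambda>v. cc_out Alg (cc_run Alg a V E ((\<lambda>_. 3::nat) (card V)) v))"
      unfolding proper_coloring_def
    proof (intro allI impI)
      fix u v assume e: "{u, v} \<in> E"
      obtain p q where pq: "{u,v} = {p,q}" "p \<noteq> q" "p \<in> V" "q \<in> V"
        using S.sg e unfolding simple_graph_def by blast
      have uv: "u \<noteq> v" "u \<in> V" "v \<in> V" using pq by (auto simp: doubleton_eq_iff)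
      obtain mu where mu: "mu < S.n" "u = S.vs ! mu" using idx uv by blast
      obtain mv where mv: "mv < S.n" "v = S.vs ! mv" using idx uv by blast
      let ?gu = "grp S.n a mu" and ?gv = "grp S.n a mv"
      let ?cu = "colf (SG S.vs S.n a ?gu) {e\<in>E. e \<subseteq> SG S.vs S.n a ?gu} a u"
      let ?cv = "colf (SG S.vs S.n a ?gv) {e\<in>E. e \<subseteq> SG S.vs S.n a ?gv} a v"
      have cu: "?cu < 2 * a" using S.colf_props[of ?gu] mu unfolding SG_def by blast
      have cv: "?cv < 2 * a" using S.colf_props[of ?gv] mv unfolding SG_def by blast
      have ou: "cc_out Alg (cc_run Alg a V E 3 u) = ?gu * (2 * a) + ?cu + 1" using outv mu by simp
      have ov: "cc_out Alg (cc_run Alg a V E 3 v) = ?gv * (2 * a) + ?cv + 1" using outv mv by simp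
      show "cc_out Alg (cc_run Alg a V E ((\<lambda>_. 3::nat) (card V)) u) \<noteq> cc_out Alg (cc_run Alg a V E ((\<lambda>_. 3::nat) (card V)) v)"
      proof (cases "?gu = ?gv")
        case True
        have "u \<in> SG S.vs S.n a ?gu" unfolding SG_def using mu by blast
        moreover have "v \<in> SG S.vs S.n a ?gu" unfolding SG_def using mv True by auto
        moreover have "{u, v} \<in> {e\<in>E. e \<subseteq> SG S.vs S.n a ?gu}" using e calculation by simp
        ultimately have "?cu \<noteq> colf (SG S.vs S.n a ?gu) {e\<in>E. e \<subseteq> SG S.vs S.n a ?gu} a v"
          using conjunct2[OF S.colf_props[of ?gu], rule_format] by blast
        thus ?thesis using ou ov True by simp
      next
        case False
        show ?thesis
        proof
          assume "cc_out Alg (cc_run Alg a V E ((\<lambda>_. 3::nat) (card V)) u) = cc_out Alg (cc_run Alg a V E ((\<lambda>_. 3::nat) (card V)) v)"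
          hence "?gu * (2 * a) + ?cu = ?gv * (2 * a) + ?cv" using ou ov by simp
          hence "?gu = ?gv" using div_parts_eq[OF cu cv] by blast
          thus False using False by simp
        qed
      qed
    qed
    have bnd: "\<forall>v\<in>V. 1 \<le> cc_out Alg (cc_run Alg a V E ((\<lambda>_. 3::nat) (card V)) v) \<and>
           real (cc_out Alg (cc_run Alg a V E ((\<lambda>_. 3::nat) (card V)) v)) \<le> (2::real) * real a powr (2 + \<epsilon>)"
    proof
      fix v assume v: "v \<in> V"
      obtain m where m: "m < S.n" "v = S.vs ! m" using idx v by blast
      let ?g = "grp S.n a m"
      let ?c = "colf (SG S.vs S.n a ?g) {e\<in>E. e \<subseteq> SG S.vs S.n a ?g} a v"
      have c: "?c < 2 * a" using S.colf_props[of ?g] m unfolding SG_def by blast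
      have o: "cc_out Alg (cc_run Alg a V E 3 v) = ?g * (2 * a) + ?c + 1" using outv m by simp
      have "?g * (2 * a) + ?c + 1 \<le> 2 * a * a" using out_bound[OF S.grp_lt[OF m(1)] c] .
      hence "real (?g * (2 * a) + ?c + 1) \<le> 2 * real a powr (2 + \<epsilon>)"
        by (rule real_bound[OF S.a2 assms])
      thus "1 \<le> cc_out Alg (cc_run Alg a V E ((\<lambda>_. 3::nat) (card V)) v) \<and>
           real (cc_out Alg (cc_run Alg a V E ((\<lambda>_. 3::nat) (card V)) v)) \<le> (2::real) * real a powr (2 + \<epsilon>)"
        using o by simp
    qed
    show "(\<forall>t < (\<lambda>_. 3::nat) (card V). \<forall>u\<in>V. \<forall>v\<in>V.
           cc_send Alg (cc_run Alg a V E t u) v < (card V + 1) ^ 2) \<and>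
       proper_coloring E (\<lambda>v. cc_out Alg (cc_run Alg a V E ((\<lambda>_. 3::nat) (card V)) v)) \<and>
       (\<forall>v\<in>V. 1 \<le> cc_out Alg (cc_run Alg a V E ((\<lambda>_. 3::nat) (card V)) v) \<and>
           real (cc_out Alg (cc_run Alg a V E ((\<lambda>_. 3::nat) (card V)) v)) \<le> (2::real) * real a powr (2 + \<epsilon>))"
      using msgs proper bnd by blast
  qed
  show ?thesis
    apply (rule_tac x=Alg in exI, rule_tac x=2 in exI, rule_tac x=3 in exI, rule_tac x=2 in exI,
        rule_tac x="\<lambda>_. 3" in exI)
    using P1 P2 by (intro conjI)
qed

end
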